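(* Let $0<a,b<1$, $f\ge3$, and let $\overline w_{m,n}$, $q^*_n(c)$, $w^*_n(c)$ be as in the context. Define the $2\times2$ matrices $$Q(b):=\begin{bmatrix}q^*_1(b)&w^*_1(b)\\ q^*_2(b)&w^*_2(b)\end{bmatrix},\qquad B:=\begin{bmatrix}\frac{b-a}{1-a}&\frac{1-b}{1-a}\\ \kappa(a,b)&\frac{1-b}{1-a}\beta(a,b)\end{bmatrix},\quad \kappa(a,b):=\frac{b-a}{1-a}\beta(a,b)-x(a,b),$$ let $M:=Q(b)^{-1}B$, and for $1\le\ell\le f$ let $\begin{bmatrix}d_1(\ell)\\ d_2(\ell)\end{bmatrix}:=M\begin{bmatrix}w^*_\ell(a)\\ w^*_{\ell+1}(a)\end{bmatrix}$. Then for all $1\le\ell\le f$ and $j\ge1$, $$\overline w_{f-\ell,f+j}=d_1(\ell)q^*_j(b)+d_2(\ell)w^*_j(b).$$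
   Context: Let $r,y,z$ be indeterminates. For $c\in(0,1)$: $\omega_c:=1-(1-c)^2r^2y^2z^2$, $\tau_c:=1+(1-c)^2r^2z^2y(1-y)$, $x_c:=c^2z^2\tau_c^2$, $\beta_c:=1+z^2(c^2-(1-c)^2r^2(y^2+c^2(1-y)^2z^2))$; $w^*_0(c):=(\beta_c-\omega_c)/x_c$, $w^*_1(c):=1$, $w^*_{n+1}(c):=\beta_cw^*_n(c)-x_cw^*_{n-1}(c)$ ($n\ge1$); $q^*_0(c):=-(1-y)(1+y+(1-c)^2r^2y^2z^2(1-y))/\tau_c^2$, $q^*_1(c):=y^2$, $q^*_{n+1}(c):=\beta_cq^*_n(c)-x_cq^*_{n-1}(c)$ ($n\ge1$). Also $\tau(a,b):=1+(1-a)(1-b)r^2z^2y(1-y)$, $x(a,b):=b^2z^2\tau(a,b)^2$, $\beta(a,b):=\beta_b-(b-a)b^2(1-b)r^2(1-y)^2z^4$. The upward array $\overline w_{m,n}$ ($0\le m<n$): $\overline w_{m,m+1}:=1$; for $n-m\ge2$: $\overline w_{m,m+\ell}:=w^*_\ell(a)$ if $m+\ell\le f$, $:=w^*_\ell(b)$ if $f\le m$; $\overline w_{f-\ell,f+1}:=\frac{1-b}{1-a}w^*_{\ell+1}(a)+\frac{b-a}{1-a}w^*_\ell(a)$ ($1\le\ell\le f$); $\overline w_{m,f+2}:=\beta(a,b)\overline w_{m,f+1}-x(a,b)\overline w_{m,f}$ ($m\le f-1$); $\overline w_{m,f+j+1}:=\beta_b\overline w_{m,f+j}-x_b\overline w_{m,f+j-1}$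 ($m\le f-1$, $j\ge2$). *)

theory Defs
  imports "HOL-Analysis.Analysis"
begin

text \<open>The indeterminates r, y, z are rendered as real parameters.\<close>

definition omega_c :: "real \<Rightarrow> real \<Rightarrow> real \<Rightarrow> real \<Rightarrow> real" where
  "omega_c r y z c = 1 - (1-c)^2 * r^2 * y^2 * z^2"

definition tau_c :: "real \<Rightarrow> real \<Rightarrow> real \<Rightarrow> real \<Rightarrow> real" where
  "tau_c r y z c = 1 + (1-c)^2 * r^2 * z^2 * y * (1-y)"

definition x_c :: "real \<Rightarrow> real \<Rightarrow> real \<Rightarrow> real \<Rightarrow> real" where
  "x_c r y z c = c^2 * z^2 * (tau_c r y z c)^2"

definition beta_c :: "real \<Rightarrow> real \<Rightarrow> real \<Rightarrow> real \<Rightarrow> real" where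
  "beta_c r y z c = 1 + z^2 * (c^2 - (1-c)^2 * r^2 * (y^2 + c^2 * (1-y)^2 * z^2))"

fun wstar :: "real \<Rightarrow> real \<Rightarrow> real \<Rightarrow> real \<Rightarrow> nat \<Rightarrow> real" where
  "wstar r y z c 0 = (beta_c r y z c - omega_c r y z c) / x_c r y z c"
| "wstar r y z c (Suc 0) = 1"
| "wstar r y z c (Suc (Suc n)) =
     beta_c r y z c * wstar r y z c (Suc n) - x_c r y z c * wstar r y z c n"

fun qstar :: "real \<Rightarrow> real \<Rightarrow> real \<Rightarrow> real \<Rightarrow> nat \<Rightarrow> real" where
  "qstar r y z c 0 = - (1-y) * (1 + y + (1-c)^2 * r^2 * y^2 * z^2 * (1-y)) / (tau_c r y z c)^2"
| "qstar r y z c (Suc 0) = y^2"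
| "qstar r y z c (Suc (Suc n)) =
     beta_c r y z c * qstar r y z c (Suc n) - x_c r y z c * qstar r y z c n"

definition tau_ab :: "real \<Rightarrow> real \<Rightarrow> real \<Rightarrow> real \<Rightarrow> real \<Rightarrow> real" where
  "tau_ab r y z a b = 1 + (1-a) * (1-b) * r^2 * z^2 * y * (1-y)"

definition x_ab :: "real \<Rightarrow> real \<Rightarrow> real \<Rightarrow> real \<Rightarrow> real \<Rightarrow> real" where
  "x_ab r y z a b = b^2 * z^2 * (tau_ab r y z a b)^2"

definition beta_ab :: "real \<Rightarrow> real \<Rightarrow> real \<Rightarrow> real \<Rightarrow> real \<Rightarrow> real" where
  "beta_ab r y z a b = beta_c r y z b - (b-a) * b^2 * (1-b) * r^2 * (1-y)^2 * z^4"

text \<open>Column m < f of the upward array beyond row f: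
  wup k = overline w_{m, f+k}; wup 0 = overline w_{m,f} = w*_{f-m}(a).\<close>
fun wup :: "real \<Rightarrow> real \<Rightarrow> real \<Rightarrow> real \<Rightarrow> real \<Rightarrow> nat \<Rightarrow> nat \<Rightarrow> nat \<Rightarrow> real" where
  "wup r y z a b f m 0 = wstar r y z a (f - m)"
| "wup r y z a b f m (Suc 0) =
     (1-b)/(1-a) * wstar r y z a (f - m + 1) + (b-a)/(1-a) * wstar r y z a (f - m)"
| "wup r y z a b f m (Suc (Suc 0)) =
     beta_ab r y z a b * wup r y z a b f m (Suc 0) - x_ab r y z a b * wup r y z a b f m 0"
| "wup r y z a b f m (Suc (Suc (Suc k))) =
     beta_c r y z b * wup r y z a b f m (Suc (Suc k)) - x_c r y z b * wup r y z a b f m (Suc k)"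

text \<open>The upward array overline w_{m,n}, meaningful for 0 \<le> m < n.\<close>
definition wbar :: "real \<Rightarrow> real \<Rightarrow> real \<Rightarrow> real \<Rightarrow> real \<Rightarrow> nat \<Rightarrow> nat \<Rightarrow> nat \<Rightarrow> real" where
  "wbar r y z a b f m n =
     (if n = m + 1 then 1
      else if n \<le> f then wstar r y z a (n - m)
      else if f \<le> m then wstar r y z b (n - m)
      else wup r y z a b f m (n - f))"

definition Qmat :: "real \<Rightarrow> real \<Rightarrow> real \<Rightarrow> real \<Rightarrow> real^2^2" where
  "Qmat r y z b = vector [vector [qstar r y z b 1, wstar r y z b 1],
                          vector [qstar r y z b 2, wstar r y z b 2]]"

definition kappa :: "real \<Rightarrow> real \<Rightarrow> real \<Rightarrow> real \<Rightarrow> real \<Rightarrow> real" where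
  "kappa r y z a b = (b-a)/(1-a) * beta_ab r y z a b - x_ab r y z a b"

definition Bmat :: "real \<Rightarrow> real \<Rightarrow> real \<Rightarrow> real \<Rightarrow> real \<Rightarrow> real^2^2" where
  "Bmat r y z a b = vector [vector [(b-a)/(1-a), (1-b)/(1-a)],
                            vector [kappa r y z a b, (1-b)/(1-a) * beta_ab r y z a b]]"

definition dvec :: "real \<Rightarrow> real \<Rightarrow> real \<Rightarrow> real \<Rightarrow> real \<Rightarrow> nat \<Rightarrow> real^2" where
  "dvec r y z a b l = (matrix_inv (Qmat r y z b) ** Bmat r y z a b)
                        *v vector [wstar r y z a l, wstar r y z a (l+1)]"

end

theory Submission
  imports Defs
begin

lemma mv2:
  fixes Q :: "real^2^2" and d :: "real^2"
  shows "(Q *v d) $ 1 = Q$1$1 * d$1 + Q$1$2 * d$2"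
    and "(Q *v d) $ 2 = Q$2$1 * d$1 + Q$2$2 * d$2"
  by (simp_all add: matrix_vector_mult_def sum_2)

theorem proposition3:
  fixes r y z a b :: real and f l j :: nat
  assumes "0 < a" "a < 1" "0 < b" "b < 1" "f \<ge> 3"
    and "z \<noteq> 0" "tau_c r y z a \<noteq> 0" "tau_c r y z b \<noteq> 0"
    and "det (Qmat r y z b) \<noteq> 0"
    and "1 \<le> l" "l \<le> f" "j \<ge> 1"
  shows "wbar r y z a b f (f - l) (f + j) =
           dvec r y z a b l $ 1 * qstar r y z b j + dvec r y z a b l $ 2 * wstar r y z b j"
proof -
  define Q where "Q = Qmat r y z b"
  define B where "B = Bmat r y z a b"
  define v where "v = (vector [wstar r y z a l, wstar r y z a (l+1)] :: real^2)"
  define d where "d = dvec r y z a b l"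
  define u where "u = wup r y z a b f (f - l)"
  have inv: "invertible Q" using assms(9) Q_def by (simp add: invertible_det_nz)
  have "Q *v d = B *v v"
  proof -
    have "d = matrix_inv Q *v (B *v v)"
      unfolding d_def dvec_def Q_def B_def v_def by (simp add: matrix_vector_mul_assoc)
    hence "Q *v d = (Q ** matrix_inv Q) *v (B *v v)" by (simp add: matrix_vector_mul_assoc[symmetric])
    also have "\<dots> = B *v v" proof -
      have "Q ** matrix_inv Q = mat 1"
        using inv unfolding invertible_def matrix_inv_def by (metis (mono_tags, lifting) someI_ex)
      thus ?thesis by simp
    qed
    finally show ?thesis .
  qed
  hence e1: "(Q *v d)$1 = (B *v v)$1" and e2: "(Q *v d)$2 = (B *v v)$2" by simp_all
  have fl: "f - (f - l) = l" using assms by simp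
  have u1: "u 1 = d$1 * qstar r y z b 1 + d$2 * wstar r y z b 1"
    using e1 unfolding mv2 u_def Q_def B_def v_def Qmat_def Bmat_def
    by (simp add: fl algebra_simps)
  have u2: "u 2 = d$1 * qstar r y z b 2 + d$2 * wstar r y z b 2"
  proof -
    have "u 2 = beta_ab r y z a b * u 1 - x_ab r y z a b * u 0"
      unfolding u_def by (simp add: numeral_2_eq_2)
    also have "\<dots> = (B *v v)$2"
      unfolding mv2 u_def B_def v_def Bmat_def kappa_def
      by (simp add: fl algebra_simps)
    also have "\<dots> = d$1 * qstar r y z b 2 + d$2 * wstar r y z b 2"
      using e2 unfolding mv2 Q_def Qmat_def by (simp add: mult.commute)
    finally show ?thesis .
  qed
  have gen: "u (Suc k) = d$1 * qstar r y z b (Suc k) + d$2 * wstar r y z b (Suc k)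
           \<and> u (Suc (Suc k)) = d$1 * qstar r y z b (Suc (Suc k)) + d$2 * wstar r y z b (Suc (Suc k))" for k
  proof (induction k)
    case 0
    then show ?case using u1 u2 by (simp add: numeral_2_eq_2)
  next
    case (Suc k)
    have "u (Suc (Suc (Suc k))) = beta_c r y z b * u (Suc (Suc k)) - x_c r y z b * u (Suc k)"
      unfolding u_def by simp
    then show ?case using Suc by (simp add: algebra_simps)
  qed
  have wb: "wbar r y z a b f (f - l) (f + j) = u j"
    unfolding wbar_def u_def using assms by auto
  obtain k where "j = Suc k" using assms(12) by (cases j) auto
  then show ?thesis using wb gen[of k] d_def by simp
qed

end
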